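(* Let $A$ be a left counital bialgebra. Then $\Delta_T$ is coassociative: $(\mathrm{id}\otimes\Delta_T)\Delta_T=(\Delta_T\otimes\mathrm{id})\Delta_T$ on $Ш(A)$.
   Context: Throughout, $\mathbf{k}$ is a commutative unital ring, all algebras are unital commutative $\mathbf{k}$-algebras, tensor products are over $\mathbf{k}$. A left counital bialgebra $(H,m,\mu,\Delta,\varepsilon)$ is an algebra $H$ with algebra homomorphisms $\Delta:H\to H\otimes H$ (coassociative) and $\varepsilon:H\to\mathbf{k}$ satisfying left counicity $(\varepsilon\otimes\mathrm{id})\Delta=\beta_\ell$, where $\beta_\ell(u)=1\otimes u$; right counicity is not required. For an algebra $A$ with unit $1_A$, $Ш(A)=\bigoplus_{n\ge1}A^{\otimes n}$, $P_r(\mathfrak a)=1_A\otimes\mathfrak a$, and the product $\diamond$ is defined bilinearly on pure tensors $\mathfrak a=a_1\otimes\mathfrak a'\in A^{\otimes m}$, $\mathfrak b=b_1\otimes\mathfrak b'\in A^{\otimes n}$ by: $a_1b_1$ if $m=n=1$; $a_1b_1\otimes\mathfrak b'$ if $m=1,n\ge2$; $a_1b_1\otimes\mathfrak a'$ if $m\ge2,n=1$; $a_1b_1\otimes\big(\mathfrak a'\diamond(1_A\otimes\mathfrak b')+(1_A\otimes\mathfrak a')\diamond\mathfrak b'-1_A\otimes(\mathfrak a'\diamond\mathfrak b')\big)$ if $m,n\ge2$. $Ш(A)\otimes Ш(A)$ has the product $\bullet$, $(x\otimes y)\bullet(x'\otimes y')=(x\diamond x')\otimes(y\diamond y')$, and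 $A\otimes A\subseteq Ш(A)\otimes Ш(A)$ via $A=A^{\otimes1}$. When $A$ is a left counital bialgebra with coproduct $\Delta_A$, the linear map $\Delta_T:Ш(A)\to Ш(A)\otimes Ш(A)$ is defined on pure tensors by induction on tensor length: $\Delta_T(a)=\Delta_A(a)$ for $a\in A$, and for $\mathfrak a'\in A^{\otimes n}$, $\Delta_T(1_A\otimes\mathfrak a')=(\mathrm{id}\otimes P_r)\Delta_T(\mathfrak a')$ and $\Delta_T(a_1\otimes\mathfrak a')=\Delta_A(a_1)\bullet(\mathrm{id}\otimes P_r)\Delta_T(\mathfrak a')$. *)

theory Defs
  imports "HOL-Library.Poly_Mapping"
begin

text \<open>
The k-algebra A is the commutative ring 'a together with a ring homomorphism
phi :: 'k => 'a (so that c . a = phi c * a).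
A "word" is a list of tensor factors, each factor a list of elements of A;
the word [l1, ..., lr] with li = [a_i1, ..., a_in_i] stands for the pure tensor
(a_11 (x) ... (x) a_1n_1) (x) ... (x) (a_r1 (x) ... (x) a_rn_r)
in Sh(A)^{(x) r}.  Elements are represented by finitely supported k-linear
combinations of words (type 'a list list =>0 'k); two representatives denote
the same tensor iff their difference lies in the k-submodule generated by the
multilinearity relations (teq).
\<close>

type_synonym ('a, 'k) comb = "'a list list \<Rightarrow>\<^sub>0 'k"

definition smul :: "'k::comm_ring_1 \<Rightarrow> ('b \<Rightarrow>\<^sub>0 'k) \<Rightarrow> ('b \<Rightarrow>\<^sub>0 'k)" where
  "smul c x = Poly_Mapping.map (\<lambda>v. c * v) x"

definition lin :: "('b \<Rightarrow> ('c \<Rightarrow>\<^sub>0 'k::comm_ring_1)) \<Rightarrow> ('b \<Rightarrow>\<^sub>0 'k) \<Rightarrow> ('c \<Rightarrow>\<^sub>0 'k)" where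
  "lin f x = (\<Sum>w\<in>Poly_Mapping.keys x. smul (Poly_Mapping.lookup x w) (f w))"

definition basis :: "'b \<Rightarrow> ('b \<Rightarrow>\<^sub>0 'k::comm_ring_1)" where
  "basis w = Poly_Mapping.single w 1"

definition upd :: "'a list list \<Rightarrow> nat \<Rightarrow> nat \<Rightarrow> 'a \<Rightarrow> 'a list list" where
  "upd w i j a = w[i := (w ! i)[j := a]]"

inductive_set trel :: "('k::comm_ring_1 \<Rightarrow> 'a::comm_ring_1) \<Rightarrow> ('a, 'k) comb set"
  for phi :: "'k \<Rightarrow> 'a" where
  zero: "0 \<in> trel phi"
| add: "x \<in> trel phi \<Longrightarrow> y \<in> trel phi \<Longrightarrow> x + y \<in> trel phi"
| smul: "x \<in> trel phi \<Longrightarrow> smul c x \<in> trel phi"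
| additive: "i < length w \<Longrightarrow> j < length (w ! i) \<Longrightarrow>
     basis (upd w i j (a + b)) - basis (upd w i j a) - basis (upd w i j b) \<in> trel phi"
| homog: "i < length w \<Longrightarrow> j < length (w ! i) \<Longrightarrow>
     basis (upd w i j (phi c * a)) - smul c (basis (upd w i j a)) \<in> trel phi"

definition teq :: "('k::comm_ring_1 \<Rightarrow> 'a::comm_ring_1) \<Rightarrow> ('a, 'k) comb \<Rightarrow> ('a, 'k) comb \<Rightarrow> bool" where
  "teq phi x y \<longleftrightarrow> x - y \<in> trel phi"

definition tens :: "('a, 'k::comm_ring_1) comb \<Rightarrow> ('a, 'k) comb \<Rightarrow> ('a, 'k) comb" where
  "tens x y = lin (\<lambda>u. lin (\<lambda>v. basis (u @ v)) y) x"

definition pre :: "'a \<Rightarrow> ('a list \<Rightarrow>\<^sub>0 'k::comm_ring_1) \<Rightarrow> ('a list \<Rightarrow>\<^sub>0 'k)" where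
  "pre a x = lin (\<lambda>l. basis (a # l)) x"

fun dia :: "'a::comm_ring_1 list \<Rightarrow> 'a list \<Rightarrow> ('a list \<Rightarrow>\<^sub>0 'k::comm_ring_1)" where
  "dia [] m = 0"
| "dia l [] = 0"
| "dia [a] [b] = basis [a * b]"
| "dia [a] (b # b' # bs) = basis (a * b # b' # bs)"
| "dia (a # a' # as) [b] = basis (a * b # a' # as)"
| "dia (a # a' # as) (b # b' # bs) =
     pre (a * b) (dia (a' # as) (1 # b' # bs) + dia (1 # a' # as) (b' # bs)
                  - pre 1 (dia (a' # as) (b' # bs)))"

definition wrap :: "('a list \<Rightarrow>\<^sub>0 'k::comm_ring_1) \<Rightarrow> ('a, 'k) comb" where
  "wrap x = lin (\<lambda>l. basis [l]) x"

fun bulW :: "'a::comm_ring_1 list list \<Rightarrow> 'a list list \<Rightarrow> ('a, 'k::comm_ring_1) comb" where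
  "bulW [] [] = basis []"
| "bulW (l # u) (m # v) = tens (wrap (dia l m)) (bulW u v)"
| "bulW _ _ = 0"

definition bullet :: "('a::comm_ring_1, 'k::comm_ring_1) comb \<Rightarrow> ('a, 'k) comb \<Rightarrow> ('a, 'k) comb" where
  "bullet x y = lin (\<lambda>u. lin (\<lambda>v. bulW u v) y) x"

definition idPr :: "('a::comm_ring_1, 'k::comm_ring_1) comb \<Rightarrow> ('a, 'k) comb" where
  "idPr x = lin (\<lambda>w. case w of [l1, l2] \<Rightarrow> basis [l1, 1 # l2] | _ \<Rightarrow> 0) x"

fun DeltaT :: "('a::comm_ring_1 \<Rightarrow> ('a, 'k::comm_ring_1) comb) \<Rightarrow> 'a list \<Rightarrow> ('a, 'k) comb" where
  "DeltaT D [] = 0"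
| "DeltaT D [a] = D a"
| "DeltaT D (a # b # l) =
     (if a = 1 then idPr (DeltaT D (b # l))
      else bullet (D a) (idPr (DeltaT D (b # l))))"

definition tens_id :: "('a list \<Rightarrow> ('a, 'k::comm_ring_1) comb) \<Rightarrow> 'a list list \<Rightarrow> ('a, 'k) comb" where
  "tens_id f w = (case w of [l1, l2] \<Rightarrow> tens (f l1) (basis [l2]) | _ \<Rightarrow> 0)"

definition id_tens :: "('a list \<Rightarrow> ('a, 'k::comm_ring_1) comb) \<Rightarrow> 'a list list \<Rightarrow> ('a, 'k) comb" where
  "id_tens f w = (case w of [l1, l2] \<Rightarrow> tens (basis [l1]) (f l2) | _ \<Rightarrow> 0)"

definition liftA :: "('a \<Rightarrow> ('a, 'k::comm_ring_1) comb) \<Rightarrow> 'a list \<Rightarrow> ('a, 'k) comb" where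
  "liftA D l = (case l of [x] \<Rightarrow> D x | _ \<Rightarrow> 0)"

definition eps_id :: "('a \<Rightarrow> 'k::comm_ring_1) \<Rightarrow> 'a list list \<Rightarrow> ('a, 'k) comb" where
  "eps_id eps w = (case w of [[x], [y]] \<Rightarrow> smul (eps x) (basis [[y]]) | _ \<Rightarrow> 0)"

definition left_counital_bialgebra ::
  "('k::comm_ring_1 \<Rightarrow> 'a::comm_ring_1) \<Rightarrow> ('a \<Rightarrow> ('a, 'k) comb) \<Rightarrow> ('a \<Rightarrow> 'k) \<Rightarrow> bool" where
  "left_counital_bialgebra phi D eps \<longleftrightarrow>
     \<comment> \<open>phi is a unital ring homomorphism (A is a k-algebra)\<close>
     (\<forall>c d. phi (c + d) = phi c + phi d) \<and> (\<forall>c d. phi (c * d) = phi c * phi d) \<and> phi 1 = 1 \<and>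
     \<comment> \<open>D takes values in A (x) A\<close>
     (\<forall>a. \<forall>w\<in>Poly_Mapping.keys (D a). \<exists>x y. w = [[x], [y]]) \<and>
     \<comment> \<open>D is k-linear\<close>
     (\<forall>a b. teq phi (D (a + b)) (D a + D b)) \<and>
     (\<forall>c a. teq phi (D (phi c * a)) (smul c (D a))) \<and>
     \<comment> \<open>D is an algebra homomorphism\<close>
     (\<forall>a b. teq phi (D (a * b)) (bullet (D a) (D b))) \<and>
     teq phi (D 1) (basis [[1], [1]]) \<and>
     \<comment> \<open>D is coassociative\<close>
     (\<forall>a. teq phi (lin (id_tens (liftA D)) (D a)) (lin (tens_id (liftA D)) (D a))) \<and>
     \<comment> \<open>eps is an algebra homomorphism\<close>
     (\<forall>a b. eps (a + b) = eps a + eps b) \<and> (\<forall>c a. eps (phi c * a) = c * eps a) \<and>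
     (\<forall>a b. eps (a * b) = eps a * eps b) \<and> eps 1 = 1 \<and>
     \<comment> \<open>left counicity: (eps (x) id) D = beta_l\<close>
     (\<forall>a. teq phi (lin (eps_id eps) (D a)) (basis [[a]]))"

end

theory Submission
  imports Defs
begin

lemma lookup_smul[simp]: "Poly_Mapping.lookup (smul c x) w = c * Poly_Mapping.lookup x w"
  unfolding smul_def by (simp add: Poly_Mapping.map.rep_eq when_def)

lemma smul_0[simp]: "smul c 0 = 0" by (rule poly_mapping_eqI) simp
lemma smul_0'[simp]: "smul 0 x = 0" by (rule poly_mapping_eqI) simp
lemma smul_1[simp]: "smul 1 x = x" by (rule poly_mapping_eqI) simp
lemma smul_add: "smul c (x + y) = smul c x + smul c y"
  by (rule poly_mapping_eqI) (simp add: lookup_add algebra_simps)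
lemma smul_add': "smul (c + d) x = smul c x + smul d x"
  by (rule poly_mapping_eqI) (simp add: lookup_add algebra_simps)
lemma smul_diff: "smul c (x - y) = smul c x - smul c y"
  by (rule poly_mapping_eqI) (simp add: lookup_minus algebra_simps)
lemma smul_uminus: "smul c (- y) = - smul c y"
  by (rule poly_mapping_eqI) (simp add: algebra_simps)
lemma smul_smul[simp]: "smul c (smul d x) = smul (c * d) x"
  by (rule poly_mapping_eqI) (simp add: algebra_simps)
lemma smul_sum: "smul c (sum f S) = sum (\<lambda>i. smul c (f i)) S"
  by (induction S rule: infinite_finite_induct) (auto simp: smul_add)
lemma smul_m1: "smul (-1) x = - x"
  by (rule poly_mapping_eqI) simp

lemma lin_superset:
  assumes "finite S" "Poly_Mapping.keys x \<subseteq> S"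
  shows "lin f x = (\<Sum>w\<in>S. smul (Poly_Mapping.lookup x w) (f w))"
  unfolding lin_def
  by (rule sum.mono_neutral_left) (auto simp: assms in_keys_iff)

lemma lin_add: "lin f (x + y) = lin f x + lin f y"
proof -
  let ?S = "Poly_Mapping.keys x \<union> Poly_Mapping.keys y"
  have "lin f (x + y) = (\<Sum>w\<in>?S. smul (Poly_Mapping.lookup (x+y) w) (f w))"
    by (rule lin_superset) (auto simp: keys_add)
  also have "\<dots> = (\<Sum>w\<in>?S. smul (Poly_Mapping.lookup x w) (f w)) + (\<Sum>w\<in>?S. smul (Poly_Mapping.lookup y w) (f w))"
    by (simp add: lookup_add smul_add' sum.distrib)
  also have "\<dots> = lin f x + lin f y"
    by (subst (1 2) lin_superset[where S = ?S]) auto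
  finally show ?thesis .
qed

lemma lin_zero[simp]: "lin f 0 = 0" by (simp add: lin_def)

lemma lin_smul: "lin f (smul c x) = smul c (lin f x)"
proof -
  have "lin f (smul c x) = (\<Sum>w\<in>Poly_Mapping.keys x. smul (Poly_Mapping.lookup (smul c x) w) (f w))"
    by (rule lin_superset) (auto simp: in_keys_iff)
  also have "\<dots> = smul c (lin f x)" by (simp add: lin_def smul_sum)
  finally show ?thesis .
qed

lemma lin_uminus: "lin f (- x) = - lin f x"
  by (metis lin_smul smul_m1)
lemma lin_diff: "lin f (x - y) = lin f x - lin f y"
  by (metis diff_conv_add_uminus lin_add lin_uminus)
lemma lin_sum: "lin f (sum g S) = sum (\<lambda>i. lin f (g i)) S"
  by (induction S rule: infinite_finite_induct) (auto simp: lin_add)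

lemma lin_single: "lin f (Poly_Mapping.single w c) = smul c (f w)"
proof -
  have "lin f (Poly_Mapping.single w c) = (\<Sum>v\<in>{w}. smul (Poly_Mapping.lookup (Poly_Mapping.single w c) v) (f v))"
    by (rule lin_superset) auto
  thus ?thesis by simp
qed

lemma lin_basis[simp]: "lin f (basis w) = f w"
  by (simp add: basis_def lin_single)

lemma lin_cong: "(\<And>w. w \<in> Poly_Mapping.keys x \<Longrightarrow> f w = g w) \<Longrightarrow> lin f x = lin g x"
  by (simp add: lin_def)

lemma lin_fadd: "lin (\<lambda>w. f w + g w) x = lin f x + lin g x"
  by (simp add: lin_def smul_add sum.distrib)
lemma lin_fsmul: "lin (\<lambda>w. smul c (f w)) x = smul c (lin f x)"
  by (simp add: lin_def smul_sum mult.commute)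
lemma lin_fzero[simp]: "lin (\<lambda>w. 0) x = 0"
  by (simp add: lin_def)

lemma lin_comp: "lin g (lin f x) = lin (\<lambda>w. lin g (f w)) x"
proof -
  have "lin f x = (\<Sum>w\<in>Poly_Mapping.keys x. smul (Poly_Mapping.lookup x w) (f w))" by (simp add: lin_def)
  hence "lin g (lin f x) = (\<Sum>w\<in>Poly_Mapping.keys x. smul (Poly_Mapping.lookup x w) (lin g (f w)))"
    by (simp add: lin_sum lin_smul)
  thus ?thesis by (simp add: lin_def[of "\<lambda>w. lin g (f w)"])
qed

lemma lin_swap: "lin (\<lambda>u. lin (\<lambda>v. F u v) y) x = lin (\<lambda>v. lin (\<lambda>u. F u v) x) y"
  by (simp add: lin_def smul_sum sum.swap[of _ "Poly_Mapping.keys x"] mult.commute)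

lemma lin_id: "lin basis x = x"
proof (rule poly_mapping_eqI)
  fix k
  show "Poly_Mapping.lookup (lin basis x) k = Poly_Mapping.lookup x k"
    unfolding lin_def basis_def
    by (cases "k \<in> Poly_Mapping.keys x") (auto simp: lookup_sum lookup_single when_def in_keys_iff if_distrib sum.delta' cong: if_cong)
qed

lemma keys_smul: "Poly_Mapping.keys (smul c x) \<subseteq> Poly_Mapping.keys x"
  by (auto simp: in_keys_iff)

lemma keys_lin: "Poly_Mapping.keys (lin f x) \<subseteq> (\<Union>w\<in>Poly_Mapping.keys x. Poly_Mapping.keys (f w))"
  unfolding lin_def using keys_sum keys_smul by fastforce

lemma keys_basis: "Poly_Mapping.keys (basis w) \<subseteq> {w}"
  by (simp add: basis_def)

lemma lin_fdiff: "lin (\<lambda>w. f w - g w) x = lin f x - lin g x"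
  by (simp add: lin_def smul_diff sum_subtractf)

lemma trel_uminus: "x \<in> trel phi \<Longrightarrow> - x \<in> trel phi"
  by (metis smul_m1 trel.smul)
lemma trel_diff: "x \<in> trel phi \<Longrightarrow> y \<in> trel phi \<Longrightarrow> x - y \<in> trel phi"
  by (metis diff_conv_add_uminus trel.add trel_uminus)
lemma trel_sum: "(\<And>i. i \<in> S \<Longrightarrow> f i \<in> trel phi) \<Longrightarrow> sum f S \<in> trel phi"
  by (induction S rule: infinite_finite_induct) (auto intro: trel.intros)

lemma lin_trel2: "(\<And>w. w \<in> Poly_Mapping.keys x \<Longrightarrow> f w \<in> trel phi) \<Longrightarrow> lin f x \<in> trel phi"
  unfolding lin_def by (rule trel_sum) (auto intro: trel.smul)

definition resp :: "('k::comm_ring_1 \<Rightarrow> 'a::comm_ring_1) \<Rightarrow> ('a list list \<Rightarrow> ('a, 'k) comb) \<Rightarrow> bool" where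
  "resp phi f \<longleftrightarrow> (\<forall>w i j a b c. i < length w \<longrightarrow> j < length (w ! i) \<longrightarrow>
     f (upd w i j (a + b)) - f (upd w i j a) - f (upd w i j b) \<in> trel phi \<and>
     f (upd w i j (phi c * a)) - smul c (f (upd w i j a)) \<in> trel phi)"

lemma lin_trel1: assumes "resp phi f" "x \<in> trel phi" shows "lin f x \<in> trel phi"
  using assms(2)
proof induction
  case zero then show ?case by (simp add: trel.zero)
next
  case (add x y) then show ?case by (simp add: lin_add trel.add)
next
  case (smul x c) then show ?case by (simp add: lin_smul trel.smul)
next
  case (additive i w j a b) then show ?case using assms(1) by (simp add: lin_diff resp_def)
next
  case (homog i w j c a) then show ?case using assms(1) by (simp add: lin_diff lin_smul resp_def)
qed

lemma resp_lin:
  fixes F :: "'a::comm_ring_1 list list \<Rightarrow> 'b \<Rightarrow> ('a, 'k::comm_ring_1) comb"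
  assumes "\<And>v. resp phi (\<lambda>w. F w v)" shows "resp phi (\<lambda>w. lin (F w) y)"
  unfolding resp_def
proof (intro allI impI conjI)
  fix w :: "'a list list" and i j and a b :: 'a and c :: 'k assume "i < length w" "j < length (w ! i)"
  with assms show "lin (F (upd w i j (a + b))) y - lin (F (upd w i j a)) y - lin (F (upd w i j b)) y \<in> trel phi"
    by (simp add: lin_fdiff[symmetric] resp_def lin_trel2)
  from assms \<open>i < length w\<close> \<open>j < length (w ! i)\<close>
  show "lin (F (upd w i j (phi c * a))) y - smul c (lin (F (upd w i j a)) y) \<in> trel phi"
    by (simp add: lin_fsmul[symmetric] lin_fdiff[symmetric] resp_def lin_trel2)
qed

lemma teq_refl[simp]: "teq phi x x" by (simp add: teq_def trel.zero)
lemma teq_sym: "teq phi x y \<Longrightarrow> teq phi y x"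
  unfolding teq_def by (metis minus_diff_eq trel_uminus)
lemma teq_trans: assumes "teq phi x y" "teq phi y z" shows "teq phi x z"
proof -
  have "(x - y) + (y - z) \<in> trel phi" using assms unfolding teq_def by (rule trel.add)
  then show ?thesis unfolding teq_def by simp
qed
lemma teq_add: assumes "teq phi x y" "teq phi x' y'" shows "teq phi (x + x') (y + y')"
proof -
  have "(x - y) + (x' - y') \<in> trel phi" using assms unfolding teq_def by (rule trel.add)
  moreover have "(x - y) + (x' - y') = (x + x') - (y + y')" by (simp add: algebra_simps)
  ultimately show ?thesis unfolding teq_def by simp
qed
lemma teq_smul: "teq phi x y \<Longrightarrow> teq phi (smul c x) (smul c y)"
  unfolding teq_def by (metis smul_diff trel.smul)
lemma teq_lin: "(\<And>w. w \<in> Poly_Mapping.keys x \<Longrightarrow> teq phi (f w) (g w)) \<Longrightarrow> teq phi (lin f x) (lin g x)"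
  unfolding teq_def by (simp add: lin_fdiff[symmetric] lin_trel2)
lemma teq_lin_arg: "resp phi f \<Longrightarrow> teq phi x y \<Longrightarrow> teq phi (lin f x) (lin f y)"
  unfolding teq_def by (metis lin_diff lin_trel1)

lemma length_upd[simp]: "length (upd w i j a) = length w"
  by (simp add: upd_def)
lemma nth_upd: "upd w i j a ! k = (if k = i \<and> i < length w then (w ! i)[j := a] else w ! k)"
  by (cases "i < length w") (auto simp: upd_def nth_list_update list_update_beyond)
lemma length_nth_upd[simp]: "length (upd w i j a ! k) = length (w ! k)"
  by (simp add: nth_upd)

lemma resp_basisI:
  fixes g :: "'a::comm_ring_1 list list \<Rightarrow> 'a list list" and phi :: "'k::comm_ring_1 \<Rightarrow> 'a"
  assumes S: "\<And>w i j a. S (upd w i j a) = S w"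
    and G: "\<And>w i j. S w \<Longrightarrow> i < length w \<Longrightarrow> j < length (w ! i) \<Longrightarrow>
       \<exists>i' j' m. i' < length (g w) \<and> j' < length (g w ! i') \<and> (\<forall>a. g (upd w i j a) = upd (g w) i' j' (m * a))"
  shows "resp phi (\<lambda>w. if S w then basis (g w) else 0)"
  unfolding resp_def
proof (intro allI impI)
  fix w :: "'a list list" and i j and a b :: 'a and c :: 'k assume ij: "i < length w" "j < length (w ! i)"
  show "(if S (upd w i j (a + b)) then basis (g (upd w i j (a + b))) else 0) -
        (if S (upd w i j a) then basis (g (upd w i j a)) else 0) -
        (if S (upd w i j b) then basis (g (upd w i j b)) else 0) \<in> trel phi \<and>
        (if S (upd w i j (phi c * a)) then basis (g (upd w i j (phi c * a))) else 0) -
        smul c (if S (upd w i j a) then basis (g (upd w i j a)) else 0) \<in> trel phi"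
  proof (cases "S w")
    case False then show ?thesis by (simp add: S trel.zero)
  next
    case True
    then obtain i' j' m where *: "i' < length (g w)" "j' < length (g w ! i')"
      "\<And>a. g (upd w i j a) = upd (g w) i' j' (m * a)" using G ij by blast
    have e1: "m * (a + b) = m * a + m * b" by (simp add: algebra_simps)
    have e2: "m * (phi c * a) = phi c * (m * a)" by (simp add: algebra_simps)
    show ?thesis using True * by (simp add: S e1 e2 trel.additive trel.homog)
  qed
qed


lemma len2E: "length w = 2 \<Longrightarrow> (\<And>a b. w = [a, b] \<Longrightarrow> P) \<Longrightarrow> P"
  by (cases w; cases "tl w"; auto)
lemma len3E: "length w = 3 \<Longrightarrow> (\<And>a b c. w = [a, b, c] \<Longrightarrow> P) \<Longrightarrow> P"
  by (cases w; cases "tl w"; cases "tl (tl w)"; auto)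
lemma len1E: "length w = 1 \<Longrightarrow> (\<And>a. w = [a] \<Longrightarrow> P) \<Longrightarrow> P"
  by (cases w; auto)

lemma nth_upd_Nil[simp]: "upd w i j a ! k = [] \<longleftrightarrow> w ! k = []"
  by (metis length_0_conv length_nth_upd)

lemma upd_append_right: "u @ upd v i j a = upd (u @ v) (length u + i) j a"
  by (simp add: upd_def list_update_append nth_append)
lemma upd_append_left: "i < length u \<Longrightarrow> upd u i j a @ v = upd (u @ v) i j a"
  by (simp add: upd_def list_update_append nth_append)

lemma resp_basisI':
  fixes g :: "'a::comm_ring_1 list list \<Rightarrow> 'a list list" and phi :: "'k::comm_ring_1 \<Rightarrow> 'a"
  assumes G: "\<And>w i j. i < length w \<Longrightarrow> j < length (w ! i) \<Longrightarrow>
       \<exists>i' j' m. i' < length (g w) \<and> j' < length (g w ! i') \<and> (\<forall>a. g (upd w i j a) = upd (g w) i' j' (m * a))"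
  shows "resp phi (\<lambda>w. basis (g w))"
  using resp_basisI[of "\<lambda>_. True" g phi] G by simp

lemma tens_basis_left: "tens (basis a) y = lin (\<lambda>v. basis (a @ v)) y"
  by (simp add: tens_def)
lemma tens_basis_right: "tens x (basis b) = lin (\<lambda>u. basis (u @ b)) x"
  by (simp add: tens_def)
lemma tens_basis: "tens (basis a) (basis b) = basis (a @ b)"
  by (simp add: tens_def)
lemma wrap_basis[simp]: "wrap (basis l) = basis [l]"
  by (simp add: wrap_def)

lemma resp_app_right:
  fixes u :: "'a::comm_ring_1 list list" and phi :: "'k::comm_ring_1 \<Rightarrow> 'a"
  shows "resp phi (\<lambda>v. basis (u @ v))"
proof (rule resp_basisI')
  fix w :: "'a list list" and i j assume "i < length w" "j < length (w ! i)"
  then show "\<exists>i' j' m. i' < length (u @ w) \<and> j' < length ((u @ w) ! i') \<and> (\<forall>a. u @ upd w i j a = upd (u @ w) i' j' (m * a))"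
    by (intro exI[of _ "length u + i"] exI[of _ j] exI[of _ 1]) (simp add: upd_append_right nth_append)
qed

lemma resp_app_left:
  fixes v :: "'a::comm_ring_1 list list" and phi :: "'k::comm_ring_1 \<Rightarrow> 'a"
  shows "resp phi (\<lambda>u. basis (u @ v))"
proof (rule resp_basisI')
  fix w :: "'a list list" and i j assume "i < length w" "j < length (w ! i)"
  then show "\<exists>i' j' m. i' < length (w @ v) \<and> j' < length ((w @ v) ! i') \<and> (\<forall>a. upd w i j a @ v = upd (w @ v) i' j' (m * a))"
    by (intro exI[of _ i] exI[of _ j] exI[of _ 1]) (simp add: upd_append_left nth_append)
qed

lemma tens_teq2: "teq phi y y' \<Longrightarrow> teq phi (tens x y) (tens x y')"
  unfolding tens_def by (intro teq_lin teq_lin_arg resp_app_right)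

lemma tens_teq1: "teq phi x x' \<Longrightarrow> teq phi (tens x y) (tens x' y)"
  unfolding tens_def by (intro teq_lin_arg resp_lin resp_app_left)

lemma tens_add1: "tens (x + x') y = tens x y + tens x' y" by (simp add: tens_def lin_add)
lemma tens_add2: "tens x (y + y') = tens x y + tens x y'" by (simp add: tens_def lin_add lin_fadd)

definition mulhd :: "'a::comm_ring_1 \<Rightarrow> 'a list \<Rightarrow> 'a list" where
  "mulhd u l = (case l of [] \<Rightarrow> [] | x # r \<Rightarrow> (u * x) # r)"

lemma mulhd_Cons[simp]: "mulhd u (x # r) = (u * x) # r" by (simp add: mulhd_def)
lemma mulhd_Nil[simp]: "mulhd u [] = []" by (simp add: mulhd_def)

definition shA :: "'a list list \<Rightarrow> bool" where
  "shA w \<longleftrightarrow> length w = 2 \<and> length (w ! 0) = 1 \<and> length (w ! 1) = 1"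

lemma shA_upd[simp]: "shA (upd w i j a) = shA w" by (simp add: shA_def)
lemma shA_iff: "shA w \<longleftrightarrow> (\<exists>u v. w = [[u], [v]])"
proof
  assume "shA w"
  then have "length w = 2" "length (w!0) = 1" "length (w!1) = 1" unfolding shA_def by auto
  then obtain a b where "w = [a, b]" "length a = 1" "length b = 1" by (metis len2E nth_Cons_0 nth_Cons_Suc One_nat_def)
  then show "\<exists>u v. w = [[u], [v]]" by (auto simp: length_Suc_conv)
qed (auto simp: shA_def)
lemma shA_simp[simp]: "shA [[u], [v]]" by (simp add: shA_def)

definition opw :: "'a::comm_ring_1 list list \<Rightarrow> 'a list list \<Rightarrow> ('a, 'k::comm_ring_1) comb" where
  "opw w1 w2 = (if shA w1 \<and> length w2 = 2 \<and> w2 ! 0 \<noteq> []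
     then basis [mulhd (w1 ! 0 ! 0) (w2 ! 0), (w1 ! 1 ! 0) # (w2 ! 1)] else 0)"

lemma opw_simp[simp]: "opw [[u], [v]] [x # r, l2] = basis [(u * x) # r, v # l2]"
  by (simp add: opw_def)

lemma resp_opw2:
  fixes w1 :: "'a::comm_ring_1 list list" and phi :: "'k::comm_ring_1 \<Rightarrow> 'a"
  shows "resp phi (opw w1)"
proof -
  have "resp phi (\<lambda>w2. if shA w1 \<and> length w2 = 2 \<and> w2 ! 0 \<noteq> [] then
     basis [mulhd (w1 ! 0 ! 0) (w2 ! 0), (w1 ! 1 ! 0) # (w2 ! 1)] else 0)"
  proof (rule resp_basisI)
    fix w :: "'a list list" and i j assume S: "shA w1 \<and> length w = 2 \<and> w ! 0 \<noteq> []" and ij: "i < length w" "j < length (w ! i)"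
    from S have "shA w1" by simp
    then obtain u v where w1: "w1 = [[u], [v]]" unfolding shA_iff by blast
    from S have "length w = 2" by simp
    then obtain l1 l2 where w0: "w = [l1, l2]" by (rule len2E)
    with S have "l1 \<noteq> []" by simp
    then obtain x r where "l1 = x # r" by (cases l1) auto
    with w0 have w: "w = [x # r, l2]" by simp
    show "\<exists>i' j' m. i' < length [mulhd (w1 ! 0 ! 0) (w ! 0), w1 ! 1 ! 0 # w ! 1] \<and>
                 j' < length ([mulhd (w1 ! 0 ! 0) (w ! 0), w1 ! 1 ! 0 # w ! 1] ! i') \<and>
                 (\<forall>a. [mulhd (w1 ! 0 ! 0) (upd w i j a ! 0), w1 ! 1 ! 0 # upd w i j a ! 1] =
                      upd [mulhd (w1 ! 0 ! 0) (w ! 0), w1 ! 1 ! 0 # w ! 1] i' j' (m * a))"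
    proof (cases "i = 0")
      case True
      show ?thesis
      proof (cases j)
        case 0 then show ?thesis using True w w1
          by (intro exI[of _ 0] exI[of _ 0] exI[of _ u]) (simp add: upd_def)
      next
        case (Suc j') then show ?thesis using True w w1 ij
          by (intro exI[of _ 0] exI[of _ j] exI[of _ 1]) (simp add: upd_def)
      qed
    next
      case False then have "i = 1" using ij w by auto
      then show ?thesis using w w1 ij
        by (intro exI[of _ 1] exI[of _ "Suc j"] exI[of _ 1]) (simp add: upd_def)
    qed
  qed simp
  then show ?thesis by (simp add: opw_def[abs_def])
qed

lemma resp_opw1:
  fixes w2 :: "'a::comm_ring_1 list list" and phi :: "'k::comm_ring_1 \<Rightarrow> 'a"
  shows "resp phi (\<lambda>w1. opw w1 w2)"
proof -
  have "resp phi (\<lambda>w1. if shA w1 \<and> length w2 = 2 \<and> w2 ! 0 \<noteq> [] then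
     basis [mulhd (w1 ! 0 ! 0) (w2 ! 0), (w1 ! 1 ! 0) # (w2 ! 1)] else 0)"
  proof (rule resp_basisI)
    fix w :: "'a list list" and i j assume S: "shA w \<and> length w2 = 2 \<and> w2 ! 0 \<noteq> []" and ij: "i < length w" "j < length (w ! i)"
    from S have "shA w" by simp
    then obtain u v where w1: "w = [[u], [v]]" unfolding shA_iff by blast
    from S have "length w2 = 2" by simp
    then obtain l1 l2 where w0: "w2 = [l1, l2]" by (rule len2E)
    with S have "l1 \<noteq> []" by simp
    then obtain x r where "l1 = x # r" by (cases l1) auto
    with w0 have w: "w2 = [x # r, l2]" by simp
    show "\<exists>i' j' m. i' < length [mulhd (w ! 0 ! 0) (w2 ! 0), w ! 1 ! 0 # w2 ! 1] \<and>
                 j' < length ([mulhd (w ! 0 ! 0) (w2 ! 0), w ! 1 ! 0 # w2 ! 1] ! i') \<and>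
                 (\<forall>a. [mulhd (upd w i j a ! 0 ! 0) (w2 ! 0), upd w i j a ! 1 ! 0 # w2 ! 1] =
                      upd [mulhd (w ! 0 ! 0) (w2 ! 0), w ! 1 ! 0 # w2 ! 1] i' j' (m * a))"
    proof (cases "i = 0")
      case True
      then show ?thesis using w w1 ij
        by (intro exI[of _ 0] exI[of _ 0] exI[of _ x]) (simp add: upd_def mult.commute)
    next
      case False then have "i = 1" using ij w1 by auto
      then show ?thesis using w w1 ij
        by (intro exI[of _ 1] exI[of _ 0] exI[of _ 1]) (simp add: upd_def)
    qed
  qed simp
  then show ?thesis by (simp add: opw_def[abs_def])
qed

definition Op :: "('a::comm_ring_1, 'k::comm_ring_1) comb \<Rightarrow> ('a, 'k) comb \<Rightarrow> ('a, 'k) comb" where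
  "Op X Y = lin (\<lambda>w1. lin (\<lambda>w2. opw w1 w2) Y) X"

lemma Op_teq2: "teq phi Y Y' \<Longrightarrow> teq phi (Op X Y) (Op X Y')"
  unfolding Op_def by (intro teq_lin teq_lin_arg resp_opw2)
lemma Op_teq1: "teq phi X X' \<Longrightarrow> teq phi (Op X Y) (Op X' Y)"
  unfolding Op_def by (intro teq_lin_arg resp_lin resp_opw1)
lemma Op_trel2: "Y \<in> trel phi \<Longrightarrow> Op X Y \<in> trel phi"
  unfolding Op_def by (intro lin_trel2 lin_trel1[OF resp_opw2])
lemma Op_trel1: "X \<in> trel phi \<Longrightarrow> Op X Y \<in> trel phi"
  unfolding Op_def by (intro lin_trel1 resp_lin resp_opw1)
lemma Op_diff1: "Op (X - X') Y = Op X Y - Op X' Y" by (simp add: Op_def lin_diff)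
lemma Op_diff2: "Op X (Y - Y') = Op X Y - Op X Y'" by (simp add: Op_def lin_diff lin_fdiff)
lemma Op_smul1: "Op (smul c X) Y = smul c (Op X Y)" by (simp add: Op_def lin_smul)
lemma Op_smul2: "Op X (smul c Y) = smul c (Op X Y)" by (simp add: Op_def lin_smul lin_fsmul)
lemma Op_add1: "Op (X + X') Y = Op X Y + Op X' Y" by (simp add: Op_def lin_add)


fun PP :: "('a::comm_ring_1 \<Rightarrow> ('a, 'k::comm_ring_1) comb) \<Rightarrow> 'a list \<Rightarrow> ('a, 'k) comb" where
  "PP D [] = basis [[1], []]"
| "PP D (a # l) = Op (D a) (PP D l)"

definition ipm :: "'a::comm_ring_1 list list \<Rightarrow> ('a, 'k::comm_ring_1) comb" where
  "ipm w = (if length w = 2 then basis [w ! 0, 1 # w ! 1] else 0)"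

lemma idPr_ipm:
  fixes x :: "('a::comm_ring_1, 'k::comm_ring_1) comb"
  shows "idPr x = lin ipm x"
proof -
  have eq: "(\<lambda>w. case w of [l1, l2] \<Rightarrow> basis [l1, 1 # l2] | _ \<Rightarrow> 0) = (ipm :: _ \<Rightarrow> ('a, 'k) comb)"
    unfolding ipm_def
    by (rule ext, case_tac w rule: list.exhaust; case_tac "tl w" rule: list.exhaust; case_tac "tl (tl w)" rule: list.exhaust) auto
  show ?thesis unfolding idPr_def eq ..
qed

lemma id_tens_eq: "id_tens f w = (if length w = 2 then tens (basis [w ! 0]) (f (w ! 1)) else 0)"
  unfolding id_tens_def
  by (cases w rule: list.exhaust; cases "tl w" rule: list.exhaust; cases "tl (tl w)" rule: list.exhaust) auto
lemma tens_id_eq: "tens_id f w = (if length w = 2 then tens (f (w ! 0)) (basis [w ! 1]) else 0)"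
  unfolding tens_id_def
  by (cases w rule: list.exhaust; cases "tl w" rule: list.exhaust; cases "tl (tl w)" rule: list.exhaust) auto

lemma resp_ipm:
  fixes phi :: "'k::comm_ring_1 \<Rightarrow> 'a::comm_ring_1"
  shows "resp phi (ipm :: _ \<Rightarrow> ('a, 'k) comb)"
proof -
  have "resp phi (\<lambda>w. if length w = 2 then basis [w ! 0, 1 # w ! 1] else (0 :: ('a, 'k) comb))"
  proof (rule resp_basisI)
    fix w :: "'a list list" and i j assume S: "length w = 2" and ij: "i < length w" "j < length (w ! i)"
    from S obtain l1 l2 where w: "w = [l1, l2]" by (rule len2E)
    show "\<exists>i' j' m. i' < length [w ! 0, 1 # w ! 1] \<and> j' < length ([w ! 0, 1 # w ! 1] ! i') \<and>
       (\<forall>a. [upd w i j a ! 0, 1 # upd w i j a ! 1] = upd [w ! 0, 1 # w ! 1] i' j' (m * a))"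
    proof (cases "i = 0")
      case True then show ?thesis using w ij
        by (intro exI[of _ 0] exI[of _ j] exI[of _ 1]) (simp add: upd_def)
    next
      case False then have "i = 1" using ij w by auto
      then show ?thesis using w ij
        by (intro exI[of _ 1] exI[of _ "Suc j"] exI[of _ 1]) (simp add: upd_def)
    qed
  qed simp
  then show ?thesis by (simp add: ipm_def[abs_def])
qed

lemma idPr_teq: "teq phi x y \<Longrightarrow> teq phi (idPr x) (idPr y)"
  unfolding idPr_ipm by (rule teq_lin_arg[OF resp_ipm])

definition good :: "'a list list \<Rightarrow> bool" where
  "good w \<longleftrightarrow> length w = 2 \<and> w ! 0 \<noteq> []"
definition good2 :: "'a list list \<Rightarrow> bool" where
  "good2 w \<longleftrightarrow> length w = 2 \<and> w ! 0 \<noteq> [] \<and> w ! 1 \<noteq> []"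

lemma keys_opw: "Poly_Mapping.keys (opw w1 w2) \<subseteq> {w. good2 w}"
  unfolding opw_def good2_def using keys_basis
  by (cases "w2 ! 0") (auto simp: basis_def)

lemma keys_Op: "Poly_Mapping.keys (Op X Y) \<subseteq> {w. good2 w}"
proof -
  have *: "Poly_Mapping.keys (lin (opw w1) Y) \<subseteq> {w. good2 w}" for w1
    using keys_lin[of "opw w1" Y] keys_opw[of w1] by blast
  show ?thesis unfolding Op_def using keys_lin[of "\<lambda>w1. lin (opw w1) Y" X] * by blast
qed

lemma good2_good: "good2 w \<Longrightarrow> good w" by (simp add: good_def good2_def)

lemma keys_PP: "Poly_Mapping.keys (PP D l) \<subseteq> {w. good w}"
  using keys_Op good2_good by (cases l) (auto simp: basis_def good_def)

lemma Op_unit: assumes "\<And>w. w \<in> Poly_Mapping.keys X \<Longrightarrow> shA w"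
  shows "Op X (basis [[1], []]) = X"
proof -
  have "Op X (basis [[1], []]) = lin basis X"
    unfolding Op_def
  proof (rule lin_cong)
    fix w assume "w \<in> Poly_Mapping.keys X"
    then have "shA w" by (rule assms)
    then obtain u v where "w = [[u], [v]]" unfolding shA_iff by blast
    then show "lin (opw w) (basis [[1], []]) = basis w" by simp
  qed
  then show ?thesis by (simp add: lin_id)
qed

lemma Op_idPr: assumes "\<And>w. w \<in> Poly_Mapping.keys Y \<Longrightarrow> good w"
  shows "Op (basis [[1], [1]]) Y = idPr Y"
  unfolding Op_def idPr_ipm lin_basis
proof (rule lin_cong)
  fix w assume "w \<in> Poly_Mapping.keys Y"
  then have "good w" by (rule assms)
  then have "length w = 2" "w ! 0 \<noteq> []" unfolding good_def by auto
  then obtain l1 l2 where "w = [l1, l2]" "l1 \<noteq> []" by (metis len2E nth_Cons_0)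
  then obtain x r where "w = [x # r, l2]" by (cases l1) auto
  then show "opw [[1], [1]] w = ipm w" by (simp add: ipm_def)
qed

lemma dia_single: "dia [a] (x # r) = basis ((a * x) # r)"
  by (cases r) auto

lemma bullet_idPr: assumes "\<And>w. w \<in> Poly_Mapping.keys X \<Longrightarrow> shA w"
  shows "bullet X (idPr Y) = Op X Y"
  unfolding bullet_def Op_def
proof (rule lin_cong)
  fix w1 assume "w1 \<in> Poly_Mapping.keys X"
  then have "shA w1" by (rule assms)
  then obtain a b where w1: "w1 = [[a], [b]]" unfolding shA_iff by blast
  have "lin (bulW w1) (idPr Y) = lin (\<lambda>w. lin (bulW w1) (ipm w)) Y"
    by (simp add: idPr_ipm lin_comp)
  also have "\<dots> = lin (opw w1) Y"
  proof (rule lin_cong)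
    fix w :: "'a list list"
    show "lin (bulW w1) (ipm w) = opw w1 w"
    proof (cases "length w = 2")
      case False then show ?thesis by (simp add: ipm_def opw_def)
    next
      case True
      then obtain l1 l2 where w: "w = [l1, l2]" by (rule len2E)
      show ?thesis
      proof (cases l1)
        case Nil then show ?thesis using w w1 by (simp add: ipm_def opw_def wrap_def tens_def)
      next
        case (Cons x r) then show ?thesis using w w1
          by (simp add: ipm_def dia_single tens_basis)
      qed
    qed
  qed
  finally show "lin (\<lambda>v. bulW w1 v) (idPr Y) = lin (opw w1) Y" by simp
qed


declare teq_trans[trans]

lemma tens_diff1: "tens (x - x') y = tens x y - tens x' y" by (simp add: tens_def lin_diff)
lemma tens_diff2: "tens x (y - y') = tens x y - tens x y'" by (simp add: tens_def lin_diff lin_fdiff)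
lemma tens_smul1: "tens (smul c x) y = smul c (tens x y)" by (simp add: tens_def lin_smul)
lemma tens_smul2: "tens x (smul c y) = smul c (tens x y)" by (simp add: tens_def lin_smul lin_fsmul)
lemma tens_zero1[simp]: "tens 0 y = 0" by (simp add: tens_def)
lemma tens_zero2[simp]: "tens x 0 = 0" by (simp add: tens_def)

lemma tens_trel1: "x \<in> trel phi \<Longrightarrow> tens x y \<in> trel phi"
  using tens_teq1[of phi x 0 y] by (simp add: teq_def)
lemma tens_trel2: "y \<in> trel phi \<Longrightarrow> tens x y \<in> trel phi"
  using tens_teq2[of phi y 0 x] by (simp add: teq_def)

definition resp1 :: "('k::comm_ring_1 \<Rightarrow> 'a::comm_ring_1) \<Rightarrow> ('a list \<Rightarrow> ('a, 'k) comb) \<Rightarrow> bool" where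
  "resp1 phi f \<longleftrightarrow> (\<forall>l j a b c. j < length l \<longrightarrow>
     f (l[j := a + b]) - f (l[j := a]) - f (l[j := b]) \<in> trel phi \<and>
     f (l[j := phi c * a]) - smul c (f (l[j := a])) \<in> trel phi)"

lemma gen_add: "j < length l \<Longrightarrow> basis [l[j := a + b]] - basis [l[j := a]] - basis [l[j := b]] \<in> trel phi"
  using trel.additive[where i=0 and w="[l]" and j=j and phi=phi and a=a and b=b] by (simp add: upd_def)
lemma gen_hom: "j < length l \<Longrightarrow> basis [l[j := phi c * a]] - smul c (basis [l[j := a]]) \<in> trel phi"
  using trel.homog[where i=0 and w="[l]" and j=j and phi=phi and a=a and c=c] by (simp add: upd_def)

lemma resp_id_tens:
  fixes f :: "'a::comm_ring_1 list \<Rightarrow> ('a, 'k::comm_ring_1) comb"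
  assumes "resp1 phi f" shows "resp phi (id_tens f)"
  unfolding resp_def
proof (intro allI impI)
  fix w :: "'a list list" and i j and a b :: 'a and c :: 'k
  assume ij: "i < length w" "j < length (w ! i)"
  show "id_tens f (upd w i j (a + b)) - id_tens f (upd w i j a) - id_tens f (upd w i j b) \<in> trel phi \<and>
        id_tens f (upd w i j (phi c * a)) - smul c (id_tens f (upd w i j a)) \<in> trel phi"
  proof (cases "length w = 2")
    case False then show ?thesis by (simp add: id_tens_eq trel.zero)
  next
    case True
    then obtain l1 l2 where w: "w = [l1, l2]" by (rule len2E)
    show ?thesis
    proof (cases "i = 0")
      case True
      then show ?thesis using w ij
        by (simp add: id_tens_eq upd_def tens_diff1[symmetric] tens_smul1[symmetric] tens_trel1 gen_add gen_hom)
    next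
      case False then have "i = 1" using ij w by auto
      then show ?thesis using w ij assms
        by (simp add: id_tens_eq upd_def tens_diff2[symmetric] tens_smul2[symmetric] tens_trel2 resp1_def)
    qed
  qed
qed

lemma resp_tens_id:
  fixes f :: "'a::comm_ring_1 list \<Rightarrow> ('a, 'k::comm_ring_1) comb"
  assumes "resp1 phi f" shows "resp phi (tens_id f)"
  unfolding resp_def
proof (intro allI impI)
  fix w :: "'a list list" and i j and a b :: 'a and c :: 'k
  assume ij: "i < length w" "j < length (w ! i)"
  show "tens_id f (upd w i j (a + b)) - tens_id f (upd w i j a) - tens_id f (upd w i j b) \<in> trel phi \<and>
        tens_id f (upd w i j (phi c * a)) - smul c (tens_id f (upd w i j a)) \<in> trel phi"
  proof (cases "length w = 2")
    case False then show ?thesis by (simp add: tens_id_eq trel.zero)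
  next
    case True
    then obtain l1 l2 where w: "w = [l1, l2]" by (rule len2E)
    show ?thesis
    proof (cases "i = 0")
      case True
      then show ?thesis using w ij assms
        by (simp add: tens_id_eq upd_def tens_diff1[symmetric] tens_smul1[symmetric] tens_trel1 resp1_def)
    next
      case False then have "i = 1" using ij w by auto
      then show ?thesis using w ij
        by (simp add: tens_id_eq upd_def tens_diff2[symmetric] tens_smul2[symmetric] tens_trel2 gen_add gen_hom)
    qed
  qed
qed

context
  fixes phi :: "'k::comm_ring_1 \<Rightarrow> 'a::comm_ring_1" and D :: "'a \<Rightarrow> ('a, 'k) comb" and eps :: "'a \<Rightarrow> 'k"
  assumes B: "left_counital_bialgebra phi D eps"
begin

lemma Dsh: "w \<in> Poly_Mapping.keys (D a) \<Longrightarrow> shA w"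
  using B unfolding left_counital_bialgebra_def shA_iff by blast
lemma Dadd: "teq phi (D (a + b)) (D a + D b)"
  using B unfolding left_counital_bialgebra_def by blast
lemma Dsmul: "teq phi (D (phi c * a)) (smul c (D a))"
  using B unfolding left_counital_bialgebra_def by blast
lemma Dmul: "teq phi (D (a * b)) (bullet (D a) (D b))"
  using B unfolding left_counital_bialgebra_def by blast
lemma D1: "teq phi (D 1) (basis [[1], [1]])"
  using B unfolding left_counital_bialgebra_def by blast
lemma Dco: "teq phi (lin (id_tens (liftA D)) (D a)) (lin (tens_id (liftA D)) (D a))"
  using B unfolding left_counital_bialgebra_def by blast

lemma PP_single: "PP D [a] = D a"
  using Dsh by (simp add: Op_unit)

lemma keys_DT: "l \<noteq> [] \<Longrightarrow> w \<in> Poly_Mapping.keys (DeltaT D l) \<Longrightarrow> good2 w"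
proof (induction l arbitrary: w)
  case Nil then show ?case by simp
next
  case (Cons a l')
  show ?case
  proof (cases l')
    case Nil
    then have "shA w" using Cons.prems Dsh by simp
    then show ?thesis by (auto simp: shA_iff good2_def)
  next
    case (Cons b l)
    with Cons.IH have IH: "\<And>w. w \<in> Poly_Mapping.keys (DeltaT D (b # l)) \<Longrightarrow> good2 w" by simp
    have ki: "Poly_Mapping.keys (idPr (DeltaT D (b # l))) \<subseteq> {w. good2 w}"
    proof -
      have "Poly_Mapping.keys (ipm w) \<subseteq> {w. good2 w}" if "good2 w" for w :: "'a list list"
        using that keys_basis[of "[w ! 0, 1 # w ! 1]"] by (auto simp: ipm_def good2_def)
      then show ?thesis unfolding idPr_ipm using keys_lin[of ipm "DeltaT D (b # l)"] IH by blast
    qed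
    show ?thesis
    proof (cases "a = 1")
      case True then show ?thesis using Cons.prems \<open>l' = b # l\<close> ki by auto
    next
      case False
      have "bullet (D a) (idPr (DeltaT D (b # l))) = Op (D a) (DeltaT D (b # l))"
        by (rule bullet_idPr) (rule Dsh)
      with False have "DeltaT D (a # b # l) = Op (D a) (DeltaT D (b # l))"
        by simp
      then show ?thesis using Cons.prems \<open>l' = b # l\<close> keys_Op by auto
    qed
  qed
qed

lemma DT_PP: "l \<noteq> [] \<Longrightarrow> teq phi (DeltaT D l) (PP D l)"
proof (induction l)
  case Nil then show ?case by simp
next
  case (Cons a l')
  show ?case
  proof (cases l')
    case Nil then show ?thesis by (simp del: PP.simps add: PP_single)
  next
    case (Cons b l)
    with Cons.IH have IH: "teq phi (DeltaT D (b # l)) (PP D (b # l))" by simp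
    show ?thesis
    proof (cases "a = 1")
      case True
      have "teq phi (idPr (DeltaT D (b # l))) (idPr (PP D (b # l)))" using IH by (rule idPr_teq)
      also have "idPr (PP D (b # l)) = Op (basis [[1], [1]]) (PP D (b # l))"
        using keys_PP by (intro Op_idPr[symmetric]) blast
      finally have "teq phi (idPr (DeltaT D (b # l))) (Op (basis [[1], [1]]) (PP D (b # l)))" .
      moreover have "teq phi (Op (basis [[1], [1]]) (PP D (b # l))) (Op (D 1) (PP D (b # l)))"
        by (rule Op_teq1, rule teq_sym, rule D1)
      ultimately have "teq phi (idPr (DeltaT D (b # l))) (Op (D 1) (PP D (b # l)))" by (rule teq_trans)
      then show ?thesis using True \<open>l' = b # l\<close> by simp
    next
      case False
      have "bullet (D a) (idPr (DeltaT D (b # l))) = Op (D a) (DeltaT D (b # l))"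
        by (rule bullet_idPr) (rule Dsh)
      with False have "DeltaT D (a # b # l) = Op (D a) (DeltaT D (b # l))"
        by simp
      then show ?thesis using IH \<open>l' = b # l\<close> by (simp add: Op_teq2)
    qed
  qed
qed

lemma PP_resp1: "resp1 phi (PP D)"
  unfolding resp1_def
proof (intro allI impI)
  fix l :: "'a list" and j a b c
  assume "j < length l"
  then show "PP D (l[j := a + b]) - PP D (l[j := a]) - PP D (l[j := b]) \<in> trel phi \<and>
       PP D (l[j := phi c * a]) - smul c (PP D (l[j := a])) \<in> trel phi"
  proof (induction l arbitrary: j)
    case Nil then show ?case by simp
  next
    case (Cons x r)
    show ?case
    proof (cases j)
      case 0
      have "D (a + b) - D a - D b \<in> trel phi" using Dadd by (simp add: teq_def diff_diff_eq)
      moreover have "D (phi c * a) - smul c (D a) \<in> trel phi" using Dsmul by (simp add: teq_def)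
      ultimately show ?thesis using 0
        by (simp add: Op_diff1[symmetric] Op_smul1[symmetric] Op_trel1)
    next
      case (Suc j')
      then have "j' < length r" using Cons by simp
      then show ?thesis using Cons.IH Suc
        by (simp add: Op_diff2[symmetric] Op_smul2[symmetric] Op_trel2)
    qed
  qed
qed

lemma LHS_red: assumes "l \<noteq> []"
  shows "teq phi (lin (id_tens (DeltaT D)) (DeltaT D l)) (lin (id_tens (PP D)) (PP D l))"
proof -
  have "teq phi (lin (id_tens (DeltaT D)) (DeltaT D l)) (lin (id_tens (PP D)) (DeltaT D l))"
  proof (rule teq_lin)
    fix w assume "w \<in> Poly_Mapping.keys (DeltaT D l)"
    then have "good2 w" using keys_DT assms by blast
    then show "teq phi (id_tens (DeltaT D) w) (id_tens (PP D) w)"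
      by (simp add: id_tens_eq good2_def tens_teq2 DT_PP)
  qed
  also have "teq phi (lin (id_tens (PP D)) (DeltaT D l)) (lin (id_tens (PP D)) (PP D l))"
    by (intro teq_lin_arg resp_id_tens PP_resp1 DT_PP assms)
  finally show ?thesis .
qed

lemma RHS_red: assumes "l \<noteq> []"
  shows "teq phi (lin (tens_id (DeltaT D)) (DeltaT D l)) (lin (tens_id (PP D)) (PP D l))"
proof -
  have "teq phi (lin (tens_id (DeltaT D)) (DeltaT D l)) (lin (tens_id (PP D)) (DeltaT D l))"
  proof (rule teq_lin)
    fix w assume "w \<in> Poly_Mapping.keys (DeltaT D l)"
    then have "good2 w" using keys_DT assms by blast
    then show "teq phi (tens_id (DeltaT D) w) (tens_id (PP D) w)"
      by (simp add: tens_id_eq good2_def tens_teq1 DT_PP)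
  qed
  also have "teq phi (lin (tens_id (PP D)) (DeltaT D l)) (lin (tens_id (PP D)) (PP D l))"
    by (intro teq_lin_arg resp_tens_id PP_resp1 DT_PP assms)
  finally show ?thesis .
qed

end

definition shA3 :: "'a list list \<Rightarrow> bool" where
  "shA3 z \<longleftrightarrow> length z = 3 \<and> length (z ! 0) = 1 \<and> length (z ! 1) = 1 \<and> length (z ! 2) = 1"

lemma shA3_upd[simp]: "shA3 (upd w i j a) = shA3 w" by (simp add: shA3_def)
lemma shA3_iff: "shA3 z \<longleftrightarrow> (\<exists>p q r. z = [[p], [q], [r]])"
proof
  assume "shA3 z"
  then have "length z = 3" "length (z!0) = 1" "length (z!1) = 1" "length (z!2) = 1" unfolding shA3_def by auto
  then obtain a b c where "z = [a, b, c]" "length a = 1" "length b = 1" "length c = 1"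
    by (metis len3E nth_Cons_0 nth_Cons_Suc One_nat_def numeral_2_eq_2)
  then show "\<exists>p q r. z = [[p], [q], [r]]" by (auto simp: length_Suc_conv)
qed (auto simp: shA3_def)

definition Tw :: "'a::comm_ring_1 list list \<Rightarrow> 'a list list \<Rightarrow> ('a, 'k::comm_ring_1) comb" where
  "Tw z w = (if shA3 z \<and> length w = 3 \<and> w ! 0 \<noteq> [] \<and> w ! 1 \<noteq> []
     then basis [mulhd (z ! 0 ! 0) (w ! 0), mulhd (z ! 1 ! 0) (w ! 1), (z ! 2 ! 0) # (w ! 2)] else 0)"

lemma Tw_simp[simp]: "Tw [[p], [q], [r]] [x # s, y # t, m] = basis [(p * x) # s, (q * y) # t, r # m]"
  by (simp add: Tw_def shA3_def)

lemma i3_cases: "i < 3 \<Longrightarrow> i = 0 \<or> i = 1 \<or> i = (2::nat)" by auto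

lemma resp_Tw2:
  fixes z :: "'a::comm_ring_1 list list" and phi :: "'k::comm_ring_1 \<Rightarrow> 'a"
  shows "resp phi (Tw z)"
proof -
  have "resp phi (\<lambda>w. if shA3 z \<and> length w = 3 \<and> w ! 0 \<noteq> [] \<and> w ! 1 \<noteq> [] then
     basis [mulhd (z ! 0 ! 0) (w ! 0), mulhd (z ! 1 ! 0) (w ! 1), (z ! 2 ! 0) # (w ! 2)] else (0 :: ('a, 'k) comb))"
  proof (rule resp_basisI)
    fix w :: "'a list list" and i j assume S: "shA3 z \<and> length w = 3 \<and> w ! 0 \<noteq> [] \<and> w ! 1 \<noteq> []"
      and ij: "i < length w" "j < length (w ! i)"
    from S have "shA3 z" by simp
    then obtain p q r where z: "z = [[p], [q], [r]]" unfolding shA3_iff by blast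
    from S have "length w = 3" by simp
    then obtain l1 l2 l3 where w0: "w = [l1, l2, l3]" by (rule len3E)
    with S have "l1 \<noteq> []" "l2 \<noteq> []" by auto
    then obtain x s y t where w: "w = [x # s, y # t, l3]" using w0 by (cases l1; cases l2) auto
    let ?g = "\<lambda>w::'a list list. [mulhd (z ! 0 ! 0) (w ! 0), mulhd (z ! 1 ! 0) (w ! 1), (z ! 2 ! 0) # (w ! 2)]"
    show "\<exists>i' j' m. i' < length (?g w) \<and> j' < length (?g w ! i') \<and> (\<forall>a. ?g (upd w i j a) = upd (?g w) i' j' (m * a))"
    proof -
      from ij w have "i = 0 \<or> i = 1 \<or> i = 2" by auto
      moreover have ?thesis if "i = 0" "j = 0" using that w z
        by (intro exI[of _ 0] exI[of _ 0] exI[of _ p]) (simp add: upd_def)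
      moreover have ?thesis if "i = 0" "j = Suc j'" for j' using that w z ij
        by (intro exI[of _ 0] exI[of _ j] exI[of _ 1]) (simp add: upd_def)
      moreover have ?thesis if "i = 1" "j = 0" using that w z
        by (intro exI[of _ 1] exI[of _ 0] exI[of _ q]) (simp add: upd_def)
      moreover have ?thesis if "i = 1" "j = Suc j'" for j' using that w z ij
        by (intro exI[of _ 1] exI[of _ j] exI[of _ 1]) (simp add: upd_def)
      moreover have ?thesis if "i = 2" using that w z ij
        by (intro exI[of _ 2] exI[of _ "Suc j"] exI[of _ 1]) (simp add: upd_def numeral_2_eq_2)
      ultimately show ?thesis by (cases j) auto
    qed
  qed simp
  then show ?thesis by (simp add: Tw_def[abs_def])
qed

lemma resp_Tw1:
  fixes w :: "'a::comm_ring_1 list list" and phi :: "'k::comm_ring_1 \<Rightarrow> 'a"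
  shows "resp phi (\<lambda>z. Tw z w)"
proof -
  have "resp phi (\<lambda>z. if shA3 z \<and> length w = 3 \<and> w ! 0 \<noteq> [] \<and> w ! 1 \<noteq> [] then
     basis [mulhd (z ! 0 ! 0) (w ! 0), mulhd (z ! 1 ! 0) (w ! 1), (z ! 2 ! 0) # (w ! 2)] else (0 :: ('a, 'k) comb))"
  proof (rule resp_basisI)
    fix z :: "'a list list" and i j assume S: "shA3 z \<and> length w = 3 \<and> w ! 0 \<noteq> [] \<and> w ! 1 \<noteq> []"
      and ij: "i < length z" "j < length (z ! i)"
    from S have "shA3 z" by simp
    then obtain p q r where z: "z = [[p], [q], [r]]" unfolding shA3_iff by blast
    from S have "length w = 3" by simp
    then obtain l1 l2 l3 where w0: "w = [l1, l2, l3]" by (rule len3E)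
    with S have "l1 \<noteq> []" "l2 \<noteq> []" by auto
    then obtain x s y t where w: "w = [x # s, y # t, l3]" using w0 by (cases l1; cases l2) auto
    let ?g = "\<lambda>z::'a list list. [mulhd (z ! 0 ! 0) (w ! 0), mulhd (z ! 1 ! 0) (w ! 1), (z ! 2 ! 0) # (w ! 2)]"
    show "\<exists>i' j' m. i' < length (?g z) \<and> j' < length (?g z ! i') \<and> (\<forall>a. ?g (upd z i j a) = upd (?g z) i' j' (m * a))"
    proof -
      from ij z have "i = 0 \<or> i = 1 \<or> i = 2" by auto
      moreover have ?thesis if "i = 0" using that w z ij
        by (intro exI[of _ 0] exI[of _ 0] exI[of _ x]) (simp add: upd_def mult.commute)
      moreover have ?thesis if "i = 1" using that w z ij
        by (intro exI[of _ 1] exI[of _ 0] exI[of _ y]) (simp add: upd_def mult.commute)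
      moreover have ?thesis if "i = 2" using that w z ij
        by (intro exI[of _ 2] exI[of _ 0] exI[of _ 1]) (simp add: upd_def numeral_2_eq_2)
      ultimately show ?thesis by blast
    qed
  qed simp
  then show ?thesis by (simp add: Tw_def[abs_def])
qed

definition TT :: "('a::comm_ring_1, 'k::comm_ring_1) comb \<Rightarrow> ('a, 'k) comb \<Rightarrow> ('a, 'k) comb" where
  "TT Z W = lin (\<lambda>z. lin (\<lambda>w. Tw z w) W) Z"

lemma TT_teq2: "teq phi W W' \<Longrightarrow> teq phi (TT Z W) (TT Z W')"
  unfolding TT_def by (intro teq_lin teq_lin_arg resp_Tw2)
lemma TT_teq1: "teq phi Z Z' \<Longrightarrow> teq phi (TT Z W) (TT Z' W)"
  unfolding TT_def by (intro teq_lin_arg resp_lin resp_Tw1)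


lemma goodE: "good w \<Longrightarrow> (\<And>x r l2. w = [x # r, l2] \<Longrightarrow> P) \<Longrightarrow> P"
proof -
  assume g: "good w" and H: "\<And>x r l2. w = [x # r, l2] \<Longrightarrow> P"
  from g have "length w = 2" "w ! 0 \<noteq> []" unfolding good_def by auto
  from \<open>length w = 2\<close> obtain l1 l2 where w: "w = [l1, l2]" by (rule len2E)
  with \<open>w ! 0 \<noteq> []\<close> obtain x r where "l1 = x # r" by (cases l1) auto
  with w H show P by simp
qed

context
  fixes phi :: "'k::comm_ring_1 \<Rightarrow> 'a::comm_ring_1" and D :: "'a \<Rightarrow> ('a, 'k) comb" and eps :: "'a \<Rightarrow> 'k"
  assumes B: "left_counital_bialgebra phi D eps"
begin

lemma DshE: "w \<in> Poly_Mapping.keys (D a) \<Longrightarrow> (\<And>u v. w = [[u], [v]] \<Longrightarrow> P) \<Longrightarrow> P"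
proof -
  assume k: "w \<in> Poly_Mapping.keys (D a)" and H: "\<And>u v. w = [[u], [v]] \<Longrightarrow> P"
  from k have "shA w" by (rule Dsh[OF B])
  then obtain u v where "w = [[u], [v]]" unfolding shA_iff by blast
  then show P by (rule H)
qed
lemma PPkE: "w \<in> Poly_Mapping.keys (PP D l) \<Longrightarrow> (\<And>x r l2. w = [x # r, l2] \<Longrightarrow> P) \<Longrightarrow> P"
proof -
  assume k: "w \<in> Poly_Mapping.keys (PP D l)" and H: "\<And>x r l2. w = [x # r, l2] \<Longrightarrow> P"
  from k have "good w" using keys_PP by blast
  then show P using H by (rule goodE)
qed

lemma WL_inner:
  "tens (basis [(u * x) # r]) (Op (D v) (PP D l2)) =
   lin (\<lambda>w3. lin (\<lambda>w4. Tw ([u] # w3) ((x # r) # w4)) (PP D l2)) (D v)"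
  unfolding tens_basis_left Op_def lin_comp
proof (rule lin_cong)
  fix w3 assume "w3 \<in> Poly_Mapping.keys (D v)"
  then obtain v1 v2 where w3: "w3 = [[v1], [v2]]" by (rule DshE)
  show "lin (\<lambda>w. lin (\<lambda>v. basis ([(u * x) # r] @ v)) (opw w3 w)) (PP D l2) =
        lin (\<lambda>w4. Tw ([u] # w3) ((x # r) # w4)) (PP D l2)"
  proof (rule lin_cong)
    fix w4 assume "w4 \<in> Poly_Mapping.keys (PP D l2)"
    then obtain y s t where "w4 = [y # s, t]" by (rule PPkE)
    then show "lin (\<lambda>v. basis ([(u * x) # r] @ v)) (opw w3 w4) = Tw ([u] # w3) ((x # r) # w4)"
      using w3 by simp
  qed
qed

lemma idl_simp: "id_tens (liftA D) [[u], [v]] = tens (basis [[u]]) (D v)"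
  by (simp add: id_tens_def liftA_def)
lemma til_simp: "tens_id (liftA D) [[u], [v]] = tens (D u) (basis [[v]])"
  by (simp add: tens_id_def liftA_def)

lemma WL_step: "lin (id_tens (PP D)) (PP D (a # l)) =
  TT (lin (id_tens (liftA D)) (D a)) (lin (id_tens (PP D)) (PP D l))"
proof -
  have L: "lin (id_tens (PP D)) (PP D (a # l)) =
     lin (\<lambda>w1. lin (\<lambda>w2. lin (id_tens (PP D)) (opw w1 w2)) (PP D l)) (D a)"
    by (simp only: PP.simps Op_def lin_comp)
  have R: "TT (lin (id_tens (liftA D)) (D a)) (lin (id_tens (PP D)) (PP D l)) =
     lin (\<lambda>w1. lin (\<lambda>z. lin (Tw z) (lin (id_tens (PP D)) (PP D l))) (id_tens (liftA D) w1)) (D a)"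
    unfolding TT_def by (rule lin_comp)
  have "lin (\<lambda>w1. lin (\<lambda>w2. lin (id_tens (PP D)) (opw w1 w2)) (PP D l)) (D a) =
     lin (\<lambda>w1. lin (\<lambda>z. lin (Tw z) (lin (id_tens (PP D)) (PP D l))) (id_tens (liftA D) w1)) (D a)"
  proof (rule lin_cong)
    fix w1 assume "w1 \<in> Poly_Mapping.keys (D a)"
    then obtain u v where w1: "w1 = [[u], [v]]" by (rule DshE)
    have "lin (\<lambda>z. lin (Tw z) (lin (id_tens (PP D)) (PP D l))) (id_tens (liftA D) w1)
        = lin (\<lambda>w3. lin (\<lambda>w2. lin (Tw ([u] # w3)) (id_tens (PP D) w2)) (PP D l)) (D v)"
      by (simp add: w1 idl_simp tens_basis_left lin_comp)
    also have "\<dots> = lin (\<lambda>w2. lin (\<lambda>w3. lin (Tw ([u] # w3)) (id_tens (PP D) w2)) (D v)) (PP D l)"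
      by (rule lin_swap)
    also have "\<dots> = lin (\<lambda>w2. lin (id_tens (PP D)) (opw w1 w2)) (PP D l)"
    proof (rule lin_cong)
      fix w2 assume "w2 \<in> Poly_Mapping.keys (PP D l)"
      then obtain x r l2 where w2: "w2 = [x # r, l2]" by (rule PPkE)
      have "lin (id_tens (PP D)) (opw w1 w2) = tens (basis [(u * x) # r]) (Op (D v) (PP D l2))"
        using w1 w2 by (simp add: id_tens_eq)
      also have "\<dots> = lin (\<lambda>w3. lin (\<lambda>w4. Tw ([u] # w3) ((x # r) # w4)) (PP D l2)) (D v)"
        by (rule WL_inner)
      also have "\<dots> = lin (\<lambda>w3. lin (Tw ([u] # w3)) (id_tens (PP D) w2)) (D v)"
        using w2 by (simp add: id_tens_eq tens_basis_left lin_comp)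
      finally show "lin (\<lambda>w3. lin (Tw ([u] # w3)) (id_tens (PP D) w2)) (D v) = lin (id_tens (PP D)) (opw w1 w2)"
        by simp
    qed
    finally show "lin (\<lambda>w2. lin (id_tens (PP D)) (opw w1 w2)) (PP D l) =
       lin (\<lambda>z. lin (Tw z) (lin (id_tens (PP D)) (PP D l))) (id_tens (liftA D) w1)" by simp
  qed
  then show ?thesis using L R by simp
qed

lemma WR_inner: "tens (Op (bullet (D u) (D x)) (PP D r)) (basis [v # l2]) =
  lin (\<lambda>w3. lin (Tw (w3 @ [[v]])) (tens (PP D (x # r)) (basis [l2]))) (D u)"
  unfolding tens_basis_right bullet_def Op_def PP.simps lin_comp
  apply (rule lin_cong)
  apply (erule DshE, hypsubst)
  apply (rule lin_cong)
  apply (erule DshE, hypsubst)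
  apply (simp add: tens_basis)
  apply (rule lin_cong)
  apply (erule PPkE, hypsubst)
  apply (simp add: tens_basis mult.assoc)
  done

lemma WR_step: "teq phi (lin (tens_id (PP D)) (PP D (a # l)))
  (TT (lin (tens_id (liftA D)) (D a)) (lin (tens_id (PP D)) (PP D l)))"
proof -
  have L: "lin (tens_id (PP D)) (PP D (a # l)) =
     lin (\<lambda>w1. lin (\<lambda>w2. lin (tens_id (PP D)) (opw w1 w2)) (PP D l)) (D a)"
    by (simp only: PP.simps Op_def lin_comp)
  have R: "TT (lin (tens_id (liftA D)) (D a)) (lin (tens_id (PP D)) (PP D l)) =
     lin (\<lambda>w1. lin (\<lambda>z. lin (Tw z) (lin (tens_id (PP D)) (PP D l))) (tens_id (liftA D) w1)) (D a)"
    unfolding TT_def by (rule lin_comp)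
  have "teq phi (lin (\<lambda>w1. lin (\<lambda>w2. lin (tens_id (PP D)) (opw w1 w2)) (PP D l)) (D a))
     (lin (\<lambda>w1. lin (\<lambda>z. lin (Tw z) (lin (tens_id (PP D)) (PP D l))) (tens_id (liftA D) w1)) (D a))"
  proof (rule teq_lin)
    fix w1 assume "w1 \<in> Poly_Mapping.keys (D a)"
    then obtain u v where w1: "w1 = [[u], [v]]" by (rule DshE)
    have "teq phi (lin (\<lambda>w2. lin (tens_id (PP D)) (opw w1 w2)) (PP D l))
       (lin (\<lambda>w2. lin (\<lambda>w3. lin (Tw (w3 @ [[v]])) (tens_id (PP D) w2)) (D u)) (PP D l))"
    proof (rule teq_lin)
      fix w2 assume "w2 \<in> Poly_Mapping.keys (PP D l)"
      then obtain x r l2 where w2: "w2 = [x # r, l2]" by (rule PPkE)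
      have "lin (tens_id (PP D)) (opw w1 w2) = tens (Op (D (u * x)) (PP D r)) (basis [v # l2])"
        using w1 w2 by (simp add: tens_id_eq)
      also have "teq phi \<dots> (tens (Op (bullet (D u) (D x)) (PP D r)) (basis [v # l2]))"
        by (rule tens_teq1, rule Op_teq1, rule Dmul[OF B])
      also have "tens (Op (bullet (D u) (D x)) (PP D r)) (basis [v # l2]) =
          lin (\<lambda>w3. lin (Tw (w3 @ [[v]])) (tens (PP D (x # r)) (basis [l2]))) (D u)"
        by (rule WR_inner)
      also have "\<dots> = lin (\<lambda>w3. lin (Tw (w3 @ [[v]])) (tens_id (PP D) w2)) (D u)"
        using w2 by (simp add: tens_id_eq)
      finally show "teq phi (lin (tens_id (PP D)) (opw w1 w2)) (lin (\<lambda>w3. lin (Tw (w3 @ [[v]])) (tens_id (PP D) w2)) (D u))" .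
    qed
    also have "lin (\<lambda>w2. lin (\<lambda>w3. lin (Tw (w3 @ [[v]])) (tens_id (PP D) w2)) (D u)) (PP D l) =
       lin (\<lambda>w3. lin (\<lambda>w2. lin (Tw (w3 @ [[v]])) (tens_id (PP D) w2)) (PP D l)) (D u)"
      by (rule lin_swap[symmetric])
    also have "\<dots> = lin (\<lambda>z. lin (Tw z) (lin (tens_id (PP D)) (PP D l))) (tens_id (liftA D) w1)"
      by (simp add: w1 til_simp tens_basis_right lin_comp)
    finally show "teq phi (lin (\<lambda>w2. lin (tens_id (PP D)) (opw w1 w2)) (PP D l))
       (lin (\<lambda>z. lin (Tw z) (lin (tens_id (PP D)) (PP D l))) (tens_id (liftA D) w1))" .
  qed
  then show ?thesis using L R by simp
qed

lemma main_PP: "teq phi (lin (id_tens (PP D)) (PP D l)) (lin (tens_id (PP D)) (PP D l))"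
proof (induction l)
  case Nil
  have "lin (id_tens (PP D)) (PP D []) = basis [[1], [1], []]"
    by (simp add: id_tens_eq tens_basis)
  also have "teq phi (basis [[1], [1], []]) (tens (D 1) (basis [[]]))"
  proof -
    have "teq phi (tens (D 1) (basis [[]])) (tens (basis [[1], [1]]) (basis [[]]))"
      by (rule tens_teq1, rule D1[OF B])
    then show ?thesis by (simp add: tens_basis teq_sym)
  qed
  also have "tens (D 1) (basis [[]]) = lin (tens_id (PP D)) (PP D [])"
  proof -
    have e: "PP D [1] = D 1" by (rule PP_single[OF B])
    have "lin (tens_id (PP D)) (PP D []) = tens (PP D [1]) (basis [[]])"
      by (simp add: tens_id_eq del: PP.simps(2))
    then show ?thesis using e by simp
  qed
  finally show ?case .
next
  case (Cons a l)
  have "lin (id_tens (PP D)) (PP D (a # l)) =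
     TT (lin (id_tens (liftA D)) (D a)) (lin (id_tens (PP D)) (PP D l))" by (rule WL_step)
  also have "teq phi \<dots> (TT (lin (tens_id (liftA D)) (D a)) (lin (id_tens (PP D)) (PP D l)))"
    by (rule TT_teq1, rule Dco[OF B])
  also have "teq phi \<dots> (TT (lin (tens_id (liftA D)) (D a)) (lin (tens_id (PP D)) (PP D l)))"
    by (rule TT_teq2, rule Cons.IH)
  also have "teq phi \<dots> (lin (tens_id (PP D)) (PP D (a # l)))"
    by (rule teq_sym, rule WR_step)
  finally show ?case .
qed

end

theorem proposition3p6:
  fixes phi :: "'k::comm_ring_1 \<Rightarrow> 'a::comm_ring_1"
    and D :: "'a \<Rightarrow> ('a, 'k) comb"
    and eps :: "'a \<Rightarrow> 'k"
    and x :: "'a list \<Rightarrow>\<^sub>0 'k"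
  assumes "left_counital_bialgebra phi D eps"
    and "\<forall>l\<in>Poly_Mapping.keys x. l \<noteq> []"
  shows "teq phi (lin (id_tens (DeltaT D)) (lin (DeltaT D) x))
                 (lin (tens_id (DeltaT D)) (lin (DeltaT D) x))"
proof -
  have eq1: "lin (id_tens (DeltaT D)) (lin (DeltaT D) x) = lin (\<lambda>l. lin (id_tens (DeltaT D)) (DeltaT D l)) x"
    by (rule lin_comp)
  have eq2: "lin (tens_id (DeltaT D)) (lin (DeltaT D) x) = lin (\<lambda>l. lin (tens_id (DeltaT D)) (DeltaT D l)) x"
    by (rule lin_comp)
  show ?thesis unfolding eq1 eq2
  proof (rule teq_lin)
    fix l assume "l \<in> Poly_Mapping.keys x"
    then have ne: "l \<noteq> []" using assms(2) by blast
    have "teq phi (lin (id_tens (DeltaT D)) (DeltaT D l)) (lin (id_tens (PP D)) (PP D l))"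
      by (rule LHS_red[OF assms(1) ne])
    also have "teq phi \<dots> (lin (tens_id (PP D)) (PP D l))"
      by (rule main_PP[OF assms(1)])
    also have "teq phi \<dots> (lin (tens_id (DeltaT D)) (DeltaT D l))"
      by (rule teq_sym, rule RHS_red[OF assms(1) ne])
    finally show "teq phi (lin (id_tens (DeltaT D)) (DeltaT D l)) (lin (tens_id (DeltaT D)) (DeltaT D l))" .
  qed
qed

end
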